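(* Let $0<x<\pi$. (a) For every $\mu>-1/2$, $|L(x,\mu)|<M\left((2\mu+1)\sin\frac{x}{2}\right)$; equivalently, for every $\lambda>0$, $|\mathrm{L}(x,\lambda)|<M(\lambda\sin x)$. (b) If $\lambda>0$ and $\lambda\sin x>t_0$, then $|\mathrm{L}(x,\lambda)|<\operatorname{arccot}(\lambda\sin x)$. (c) If $\mu>-1/2$ and $(2\mu+1)\sin\frac{x}{2}<1$, then \[ |L(x,\mu)|<\ln\frac{1}{(2\mu+1)\sin\frac{x}{2}}+C_2,\qquad C_2=\ln(1+\sqrt2). \]
   Context: For real $x$ and $\mu>-1$, $L(x,\mu)=\sum_{k=1}^\infty \frac{e^{ikx}}{k+\mu}$ (convergent for $x\notin 2\pi\mathbb{Z}$), and for $\lambda>-1$, $\mathrm{L}(x,\lambda)=e^{-ix}L\left(2x,\frac{\lambda-1}{2}\right)=2\sum_{k=1}^\infty\frac{e^{(2k-1)ix}}{2k+\lambda-1}$. For $t>0$, $M(t)=\int_0^\infty \frac{e^{-tu}}{\sqrt{u^2+1}}\,du$. The constant $t_0$ is defined as $t_0=\inf\{s>0:\ M(t)<\operatorname{arccot} t \text{ for all } t>s\}$ (numerically $t_0\approx 0.7096$, the positive root of $M(t)=\operatorname{arccot}t$). *)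

theory Defs
  imports "HOL-Analysis.Analysis"
begin

definition Lser :: "real \<Rightarrow> real \<Rightarrow> complex" where
  "Lser x \<mu> = (\<Sum>n. cis (real (Suc n) * x) / complex_of_real (real (Suc n) + \<mu>))"

definition Lbig :: "real \<Rightarrow> real \<Rightarrow> complex" where
  "Lbig x lam = cis (- x) * Lser (2 * x) ((lam - 1) / 2)"

definition Mfun :: "real \<Rightarrow> real" where
  "Mfun t = integral {0..} (\<lambda>u. exp (- t * u) / sqrt (u\<^sup>2 + 1))"

definition arccot :: "real \<Rightarrow> real" where
  "arccot t = pi / 2 - arctan t"

definition t0 :: real where
  "t0 = Inf {s. s > 0 \<and> (\<forall>t>s. Mfun t < arccot t)}"

end

theory Submission
  imports Defs "HOL-Real_Asymp.Real_Asymp"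
begin



lemma sinh_gt: fixes y :: real assumes "y > 0" shows "exp y - exp (-y) > 2*y"
proof -
  define A where "A = 1 + y + y^2/2"
  have A: "A \<le> exp y" unfolding A_def using exp_lower_Taylor_quadratic[of y] assms by simp
  have Apos: "A > 0" unfolding A_def using assms by (simp add: add_pos_nonneg)
  have "exp (-y) = 1 / exp y" by (simp add: exp_minus field_simps)
  also have "\<dots> \<le> 1 / A" using A Apos by (simp add: frac_le)
  finally have e: "exp (-y) \<le> 1/A" .
  have "A - 1/A > 2*y"
  proof -
    have "A*A - 1 - 2*y*A = y^4/4" unfolding A_def by (simp add: power2_eq_square power4_eq_xxxx algebra_simps)
    moreover have "y^4/4 > 0" using assms by simp
    ultimately have "A*A - 1 > 2*y*A" by linarith
    then show ?thesis using Apos by (simp add: field_simps)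
  qed
  then show ?thesis using A e by linarith
qed

lemma key_ineq:
  fixes s c \<mu> :: real assumes s: "s > 0" and c: "c > 0"
  shows "2*c*exp(-\<mu>* s)*exp(-s) / sqrt((1-exp(-s))^2 + 4*exp(-s)*c^2)
         < exp(-(\<mu>+1/2)* s) / sqrt((s/(2*c))^2 + 1)"
proof -
  define w where "w = exp(-s/2)"
  have w: "w > 0" "w < 1" unfolding w_def using s by auto
  have ew: "exp(-s) = w^2" unfolding w_def by (simp add: power2_eq_square flip: exp_add)
  have ew2: "exp(-(\<mu>+1/2)* s) = exp(-\<mu>* s) * w" unfolding w_def by (simp add: algebra_simps flip: exp_add)
  have ws: "1/w - w > s"
  proof -
    have "1/w = exp(s/2)" unfolding w_def by (simp add: exp_minus inverse_eq_divide)
    then show ?thesis using sinh_gt[of "s/2"] s unfolding w_def by simp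
  qed
  hence ws2: "w* s < 1 - w^2" using w by (simp add: field_simps power2_eq_square)
  have ws3: "(w* s)^2 < (1 - w^2)^2" using ws2 w s by (intro power_strict_mono) auto
  define D where "D = sqrt((1-w^2)^2 + 4*w^2*c^2)"
  define q where "q = sqrt((s/(2*c))^2 + 1)"
  have Dpos: "D > 0" unfolding D_def using w c by (intro real_sqrt_gt_zero add_nonneg_pos) auto
  have qpos: "q > 0" unfolding q_def by (intro real_sqrt_gt_zero) (simp add: add_nonneg_pos)
  have "(2*c*w*q)^2 = w^2* s^2 + 4*c^2*w^2" unfolding q_def using c
    by (simp add: power_mult_distrib field_simps power2_eq_square)
  also have "\<dots> < D^2" unfolding D_def using ws3 by (simp add: power_mult_distrib)
  finally have "(2*c*w*q)^2 < D^2" .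
  hence lt: "2*c*w*q < D" using Dpos by (meson power_less_imp_less_base less_le)
  have "2*c*exp(-\<mu>* s)*w^2 / D < exp(-\<mu>* s) * w / q"
  proof -
    have "2*c*exp(-\<mu>* s)*w^2 * q < exp(-\<mu>* s) * w * D"
    proof -
      have "2*c*exp(-\<mu>* s)*w^2 * q = exp(-\<mu>* s) * w * (2*c*w*q)" by (simp add: power2_eq_square mult_ac)
      also have "\<dots> < exp(-\<mu>* s) * w * D" using lt w by simp
      finally show ?thesis .
    qed
    moreover have "a*q < b*D \<Longrightarrow> a/D < b/q" for a b using Dpos qpos by (simp add: field_simps)
    ultimately show ?thesis by blast
  qed
  then show ?thesis unfolding ew ew2 D_def q_def by simp
qed


lemma hasint_Ici_Ioi:
  fixes f :: "real \<Rightarrow> 'a::banach"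
  shows "(f has_integral I) {0..} \<longleftrightarrow> (f has_integral I) {0<..}"
  by (rule has_integral_spike_set_eq) (auto intro: negligible_subset[of "{0}"])

lemma hT: fixes c x \<mu> :: real assumes c: "c > 0" and mu: "\<mu> > -1"
  shows "((\<lambda>u. cis (real (Suc k) * x) * complex_of_real (2*c*exp (-(((real (Suc k) + \<mu>)*(2*c))*u)))) has_integral
     cis (real (Suc k) * x) / complex_of_real (real (Suc k) + \<mu>)) {0<..}"
  proof -
    define a where "a = (real (Suc k) + \<mu>)*(2*c)"
    have ne: "real (Suc k) + \<mu> > 0" using mu by simp
    have A: "a > 0" unfolding a_def using ne c by simp
    from has_integral_exp_minus_to_infinity[OF A, of 0]
    have "((\<lambda>u. exp (-(a*u))) has_integral 1/a) {0..}" by simp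
    then have "((\<lambda>u. 2*c*exp (-(a*u))) has_integral 2*c*(1/a)) {0..}" by (rule has_integral_mult_right)
    then have "((\<lambda>u. complex_of_real (2*c*exp (-(a*u)))) has_integral complex_of_real (2*c*(1/a))) {0..}"
      by (rule has_integral_of_real)
    then have "((\<lambda>u. cis (real (Suc k) * x) * complex_of_real (2*c*exp (-(a*u)))) has_integral
        cis (real (Suc k) * x) * complex_of_real (2*c*(1/a))) {0..}" by (rule has_integral_mult_right)
    moreover have e1: "2*c*(1/a) = 1/(real (Suc k) + \<mu>)" unfolding a_def using c ne by simp
    moreover have "cis (real (Suc k) * x) * complex_of_real (1/(real (Suc k) + \<mu>)) = cis (real (Suc k) * x) / complex_of_real (real (Suc k) + \<mu>)"
      by (simp add: of_real_divide)
    ultimately show ?thesis by (simp add: hasint_Ici_Ioi a_def)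
  qed


lemma fz_term: fixes c u x \<mu> :: real
  shows "complex_of_real (2*c*exp(-(\<mu>*(2*c*u)))) * (complex_of_real (exp (-(2*c*u))) * cis x) ^ Suc k
     = cis (real (Suc k) * x) * complex_of_real (2*c*exp (-(((real (Suc k) + \<mu>)*(2*c))*u)))"
proof -
  have re: "exp(-(\<mu>*(2*c*u))) * exp(-(2*c*u))^Suc k = exp(-(((real (Suc k) + \<mu>)*(2*c))*u))"
  proof -
    have "exp(-(2*c*u))^Suc k = exp(real (Suc k) * (-(2*c*u)))" by (rule exp_of_nat_mult[symmetric])
    hence "exp(-(\<mu>*(2*c*u))) * exp(-(2*c*u))^Suc k = exp(-(\<mu>*(2*c*u))) * exp(real (Suc k) * (-(2*c*u)))"
      by (simp only:)
    also have "\<dots> = exp(-(\<mu>*(2*c*u)) + real (Suc k) * (-(2*c*u)))"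
      by (rule exp_add[symmetric])
    also have "-(\<mu>*(2*c*u)) + real (Suc k) * (-(2*c*u)) = -(((real (Suc k) + \<mu>)*(2*c))*u)"
      by (simp add: algebra_simps)
    finally show ?thesis .
  qed
  have "complex_of_real (2*c*exp(-(\<mu>*(2*c*u)))) * (complex_of_real (exp (-(2*c*u))) * cis x) ^ Suc k
      = complex_of_real (2*c*(exp(-(\<mu>*(2*c*u))) * exp(-(2*c*u))^Suc k)) * cis (real (Suc k) * x)"
    unfolding power_mult_distrib Complex.DeMoivre of_real_mult of_real_power by (simp only: mult_ac)
  then show ?thesis unfolding re by (simp add: mult_ac)
qed

lemma geom_bound: fixes z :: complex and c :: real
  assumes zr: "norm z < 1" and c: "c > 0" and z1: "cmod (1 - z) \<ge> c"
  shows "norm (\<Sum>k<n. z ^ Suc k) \<le> norm z * (2 / c)"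
proof -
  have zne: "z \<noteq> 1" using zr by auto
  have "(\<Sum>k<n. z ^ Suc k) = z * ((z ^ n - 1) / (z - 1))"
    by (simp add: sum_distrib_left geometric_sum[OF zne, symmetric])
  hence "norm (\<Sum>k<n. z ^ Suc k) = norm z * (norm (z ^ n - 1) / norm (z - 1))"
    by (simp add: norm_mult norm_divide)
  also have "\<dots> \<le> norm z * (2 / c)"
  proof -
    have "norm (z ^ n - 1) \<le> norm (z ^ n) + 1" by (metis norm_one norm_triangle_ineq4)
    also have "\<dots> \<le> 2" using zr by (simp add: norm_power power_le_one)
    finally have n1: "norm (z ^ n - 1) \<le> 2" .
    have n2: "norm (z - 1) \<ge> c" using z1 by (simp add: norm_minus_commute)
    have "norm (z ^ n - 1) / norm (z - 1) \<le> 2 / c"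
      using n1 n2 c by (intro frac_le) auto
    then show ?thesis by (rule mult_left_mono) simp
  qed
  finally show ?thesis .
qed
lemma integral_Ici_Ioi:
  fixes f :: "real \<Rightarrow> 'a::banach"
  shows "integral {0..} f = integral {0<..} f"
proof (cases "f integrable_on {0..}")
  case True
  then have "(f has_integral integral {0..} f) {0<..}" using hasint_Ici_Ioi has_integral_integral by blast
  then show ?thesis by (rule integral_unique[symmetric])
next
  case False
  then have "\<not> f integrable_on {0<..}" unfolding integrable_on_def by (simp add: hasint_Ici_Ioi)
  then show ?thesis using False by (simp add: not_integrable_integral)
qed

lemma integrable_Ici_Ioi:
  fixes f :: "real \<Rightarrow> 'a::banach"
  shows "f integrable_on {0..} \<longleftrightarrow> f integrable_on {0<..}"
  unfolding integrable_on_def by (simp add: hasint_Ici_Ioi)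

lemma norm_one_minus_sq:
  fixes r x :: real
  shows "(cmod (1 - complex_of_real r * cis x))^2 = (1-r)^2 + 4*r*(sin(x/2))^2"
proof -
  have cx: "cos x = 1 - 2 * sin (x/2) ^ 2" using cos_double_sin[of "x/2"] by simp
  have "(cmod (1 - complex_of_real r * cis x))^2 = (1 - r * cos x)^2 + (r * sin x)^2"
    by (simp add: cmod_power2)
  also have "\<dots> = 1 - 2*r*cos x + r^2 * (sin x ^ 2 + cos x ^ 2)"
    by algebra
  also have "\<dots> = 1 - 2*r*cos x + r^2" by simp
  also have "\<dots> = (1-r)^2 + 4*r*(sin(x/2))^2" unfolding cx
    by (simp add: power2_eq_square algebra_simps)
  finally show ?thesis .
qed


lemma z1_bound: fixes r x c :: real
  assumes r: "r > 0" "r \<le> 1" and c: "c = sin (x/2)" "c > 0" "c \<le> 1"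
  shows "cmod (1 - complex_of_real r * cis x) \<ge> c"
proof -
  have "(cmod (1 - complex_of_real r * cis x))^2 = (1-r)^2 + 4*r*c^2"
    unfolding c by (rule norm_one_minus_sq)
  moreover have "(1-r)^2 + 4*r*c^2 - c^2 = (1-r)^2*(1-c^2) + c^2*(r^2+2*r)"
    by (simp add: power2_eq_square algebra_simps)
  moreover have "(1-r)^2*(1-c^2) \<ge> 0" using c by (simp add: power_le_one)
  moreover have "c^2*(r^2+2*r) \<ge> 0" using r by simp
  ultimately have "c^2 \<le> (cmod (1 - complex_of_real r * cis x))^2" by linarith
  then show ?thesis by (rule power2_le_imp_le) simp
qed

lemma Lser_repr:
  fixes x \<mu> c :: real and z g :: "real \<Rightarrow> complex"
  assumes x: "0 < x" "x < 2*pi" and mu: "\<mu> > -1"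
  and c_def: "c = sin (x/2)"
  and z_def: "z = (\<lambda>u::real. complex_of_real (exp (-(2*c*u))) * cis x)"
  and g_def: "g = (\<lambda>u::real. complex_of_real (2*c*exp (-(\<mu>*(2*c*u)))) * (z u / (1 - z u)))"
  shows "g integrable_on {0<..}" "Lser x \<mu> = integral {0<..} g"
    "\<And>u. u > 0 \<Longrightarrow> norm (g u) \<le> 4*exp(-(((\<mu>+1)*(2*c))*u))"
proof -
  have c: "c > 0" "c \<le> 1" unfolding c_def using x by (auto intro: sin_gt_zero)
  have zn: "norm (z u) = exp(-(2*c*u))" for u by (simp add: z_def norm_mult)
  have z1: "cmod (1 - z u) \<ge> c" if "u \<ge> 0" for u
    unfolding z_def using c that by (intro z1_bound[OF _ _ c_def]) auto
  define T where "T k = cis (real (Suc k) * x) / complex_of_real (real (Suc k) + \<mu>)" for k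
  define f where "f n u = (\<Sum>k<n. cis (real (Suc k) * x) * complex_of_real (2*c*exp (-(((real (Suc k) + \<mu>)*(2*c))*u))))" for n u
  have hf: "(f n has_integral (\<Sum>k<n. T k)) {0<..}" for n
    unfolding f_def T_def by (rule has_integral_sum, simp, rule hT[OF c(1) mu])
  have fz: "f n u = complex_of_real (2*c*exp(-(\<mu>*(2*c*u)))) * (\<Sum>k<n. z u ^ Suc k)" for n u
    unfolding f_def sum_distrib_left z_def fz_term ..
  have bound: "norm (f n u) \<le> 4*exp(-(((\<mu>+1)*(2*c))*u))" if u: "u > 0" for n u
  proof -
    define r where "r = exp(-(2*c*u))"
    have r: "r > 0" "r < 1" unfolding r_def using c u by auto
    have zr: "norm (z u) = r" using zn r_def by simp
    have ns: "norm (\<Sum>k<n. z u ^ Suc k) \<le> r * (2 / c)"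
      using geom_bound[of "z u" c n] zr r c z1[of u] u by simp
    have "norm (f n u) = 2*c*exp(-(\<mu>*(2*c*u))) * norm (\<Sum>k<n. z u ^ Suc k)"
      unfolding fz using c by (simp add: norm_mult)
    also have "\<dots> \<le> 2*c*exp(-(\<mu>*(2*c*u))) * (r * (2/c))"
      using c by (intro mult_left_mono[OF ns]) simp
    also have "\<dots> = 4 * (exp(-(\<mu>*(2*c*u))) * r)" using c by (simp add: field_simps)
    also have "exp(-(\<mu>*(2*c*u))) * r = exp(-(((\<mu>+1)*(2*c))*u))"
    proof -
      have "exp(-(\<mu>*(2*c*u))) * r = exp(-(\<mu>*(2*c*u)) + -(2*c*u))" unfolding r_def by (rule exp_add[symmetric])
      also have "-(\<mu>*(2*c*u)) + -(2*c*u) = -(((\<mu>+1)*(2*c))*u)" by (simp add: algebra_simps)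
      finally show ?thesis .
    qed
    finally show ?thesis .
  qed
  have conv: "(\<lambda>n. f n u) \<longlonglongrightarrow> g u" if u: "u > 0" for u
  proof -
    have "norm (z u) < 1" using zn c u by simp
    from sums_mult[OF geometric_sums[OF this], of "z u"]
    have "(\<lambda>n. \<Sum>i<n. z u ^ Suc i) \<longlonglongrightarrow> z u * (1 / (1 - z u))" by (simp add: sums_def)
    hence "(\<lambda>n. complex_of_real (2*c*exp(-(\<mu>*(2*c*u)))) * (\<Sum>i<n. z u ^ Suc i)) \<longlonglongrightarrow>
        complex_of_real (2*c*exp(-(\<mu>*(2*c*u)))) * (z u * (1 / (1 - z u)))"
      by (rule tendsto_mult_left)
    then show ?thesis unfolding fz g_def by simp
  qed
  have hint: "(\<lambda>u. 4*exp(-(((\<mu>+1)*(2*c))*u))) integrable_on {0<..}"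
  proof -
    have A: "(\<mu>+1)*(2*c) > 0" using mu c by simp
    from has_integral_exp_minus_to_infinity[OF A, of 0]
    have "((\<lambda>u. exp (-(((\<mu>+1)*(2*c))*u))) has_integral 1/((\<mu>+1)*(2*c))) {0..}" by simp
    then have "((\<lambda>u. 4*exp (-(((\<mu>+1)*(2*c))*u))) has_integral 4*(1/((\<mu>+1)*(2*c)))) {0..}"
      by (rule has_integral_mult_right)
    then show ?thesis unfolding hasint_Ici_Ioi integrable_on_def by blast
  qed
  have fint: "f n integrable_on {0<..}" for n using hf by blast
  note dc = dominated_convergence[of f "{0<..}" "\<lambda>u. 4*exp(-(((\<mu>+1)*(2*c))*u))" g, OF fint hint bound conv]
  show "g integrable_on {0<..}" by (rule dc(1)) auto
  have "(\<lambda>n. \<Sum>k<n. T k) \<longlonglongrightarrow> integral {0<..} g"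
    using dc(2) by (simp add: integral_unique[OF hf])
  hence "T sums integral {0<..} g" by (simp add: sums_def)
  then show "Lser x \<mu> = integral {0<..} g" unfolding Lser_def T_def by (simp add: sums_iff)
  show "\<And>u. u > 0 \<Longrightarrow> norm (g u) \<le> 4*exp(-(((\<mu>+1)*(2*c))*u))"
  proof -
    fix u :: real assume u: "u > 0"
    have "(\<lambda>n. norm (f n u)) \<longlonglongrightarrow> norm (g u)" using conv[OF u] by (rule tendsto_norm)
    then show "norm (g u) \<le> 4*exp(-(((\<mu>+1)*(2*c))*u))"
      by (rule Lim_bounded) (use bound[OF u] in auto)
  qed
qed



lemma exp_int_Ioi: fixes a C :: real assumes "a > 0"
  shows "(\<lambda>u. C * exp(-(a*u))) integrable_on {0<..}"
proof -
  from has_integral_exp_minus_to_infinity[OF assms, of 0]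
  have "((\<lambda>u. exp (-(a*u))) has_integral 1/a) {0..}" by simp
  then have "((\<lambda>u. C*exp (-(a*u))) has_integral C*(1/a)) {0..}"
    by (rule has_integral_mult_right)
  then show ?thesis unfolding hasint_Ici_Ioi integrable_on_def by blast
qed

lemma sq1_ne: "(u::real)^2 + 1 \<noteq> 0" by (smt (verit) zero_le_power2)

lemma sq1_pos: "0 < (u::real)^2 + 1" by (smt (verit) zero_le_power2)

lemma P_int: fixes t :: real assumes "t > 0"
  shows "(\<lambda>u. exp (- t * u) / sqrt (u\<^sup>2 + 1)) integrable_on {0<..}"
proof -
  have "(\<lambda>u. exp (- t * u) / sqrt (u\<^sup>2 + 1)) absolutely_integrable_on {0<..}"
  proof (rule measurable_bounded_by_integrable_imp_absolutely_integrable)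
    show "(\<lambda>u. exp (- t * u) / sqrt (u\<^sup>2 + 1)) \<in> borel_measurable (lebesgue_on {0<..})"
      by (intro continuous_imp_measurable_on_sets_lebesgue continuous_intros) (auto simp: sq1_ne)
    show "{0::real<..} \<in> sets lebesgue" by (simp add: borel_open)
    show "(\<lambda>u. 1 * exp(-(t*u))) integrable_on {0<..}" by (rule exp_int_Ioi[OF assms])
    show "norm (exp (- t * u) / sqrt (u\<^sup>2 + 1)) \<le> 1 * exp(-(t*u))" if "u \<in> {0<..}" for u
    proof -
      have q: "1 \<le> sqrt (u\<^sup>2 + 1)" by simp
      have "exp (- t * u) / sqrt (u\<^sup>2 + 1) \<le> exp (- t * u) / 1" by (rule divide_left_mono[OF q]) (auto simp: sq1_pos)
      moreover have "exp (- t * u) / sqrt (u\<^sup>2 + 1) \<ge> 0" by simp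
      ultimately show ?thesis by simp
    qed
  qed
  then show ?thesis using absolutely_integrable_on_def by blast
qed

lemma main_a:
  fixes x \<mu> :: real
  assumes x: "0 < x" "x < 2*pi" and mu: "\<mu> > -1/2"
  shows "cmod (Lser x \<mu>) < Mfun ((2*\<mu>+1) * sin (x/2))"
proof -
  define c where "c = sin (x/2)"
  define z where "z = (\<lambda>u::real. complex_of_real (exp (-(2*c*u))) * cis x)"
  define g where "g = (\<lambda>u::real. complex_of_real (2*c*exp (-(\<mu>*(2*c*u)))) * (z u / (1 - z u)))"
  have mu1: "\<mu> > -1" using mu by simp
  note R = Lser_repr[OF x mu1 c_def z_def g_def]
  have c: "c > 0" "c \<le> 1" unfolding c_def using x by (auto intro: sin_gt_zero)
  define t where "t = (2*\<mu>+1) * c"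
  have t: "t > 0" unfolding t_def using c mu by simp
  define P where "P = (\<lambda>u. exp (- t * u) / sqrt (u\<^sup>2 + 1))"
  define N where "N = (\<lambda>u. norm (g u))"
  have M: "Mfun ((2*\<mu>+1) * sin (x/2)) = integral {0<..} P"
    unfolding Mfun_def P_def t_def c_def by (rule integral_Ici_Ioi)
  have Pint: "P integrable_on {0<..}" unfolding P_def by (rule P_int[OF t])
  have A: "(\<mu>+1)*(2*c) > 0" using mu c by simp
  have gabs: "g absolutely_integrable_on {0<..}"
    by (rule absolutely_integrable_integrable_bound[OF _ R(1) exp_int_Ioi[OF A, of 4]]) (use R(3) in auto)
  have Nint: "N integrable_on {0<..}" using gabs unfolding N_def absolutely_integrable_on_def by blast
  have normL: "cmod (Lser x \<mu>) \<le> integral {0<..} N"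
    unfolding R(2) N_def by (rule integral_norm_bound_integral[OF R(1) Nint[unfolded N_def]]) simp
  have zr: "norm (z u) = exp(-(2*c*u))" for u by (simp add: z_def norm_mult)
  have z1: "cmod (1 - z u) = sqrt ((1-exp(-(2*c*u)))^2 + 4*exp(-(2*c*u))*c^2)" for u
  proof -
    have "(cmod (1 - z u))^2 = (1-exp(-(2*c*u)))^2 + 4*exp(-(2*c*u))*c^2"
      unfolding z_def c_def by (rule norm_one_minus_sq)
    then show ?thesis by (metis norm_ge_zero real_sqrt_abs abs_of_nonneg)
  qed
  have NP: "N u < P u" if u: "u > 0" for u
  proof -
    define s where "s = 2*c*u"
    have s: "s > 0" unfolding s_def using c u by simp
    have nc: "norm (complex_of_real (2*c*exp (-(\<mu>*(2*c*u))))) = 2*c*exp(-(\<mu>*(2*c*u)))"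
      using c by (simp only: norm_of_real) simp
    have "N u = 2*c*exp(-\<mu>* s)*exp(-s) / sqrt((1-exp(-s))^2 + 4*exp(-s)*c^2)"
      unfolding N_def g_def norm_mult nc norm_divide zr z1 s_def by simp
    also have "\<dots> < exp(-(\<mu>+1/2)* s) / sqrt((s/(2*c))^2 + 1)" by (rule key_ineq[OF s c(1)])
    also have "\<dots> = P u" unfolding P_def s_def t_def using c by (simp add: algebra_simps)
    finally show ?thesis .
  qed
  define D where "D = (\<lambda>u. P u - N u)"
  have Dint: "D integrable_on {0<..}" unfolding D_def by (rule integrable_diff[OF Pint Nint])
  have intD: "integral {0<..} D = integral {0<..} P - integral {0<..} N"
    unfolding D_def by (rule integral_diff[OF Pint Nint])
  have contD: "continuous_on {1..2} D"
  proof -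
    have ne: "1 - z u \<noteq> 0" if "u \<in> {1..2}" for u
    proof -
      have "norm (z u) < 1" using zr c that by simp
      then show ?thesis by auto
    qed
    show ?thesis unfolding D_def P_def N_def g_def
      using ne unfolding z_def
      by (intro continuous_intros) (auto simp: sq1_ne)
  qed
  obtain u0 where u0: "u0 \<in> {1..2}" "\<And>y. y \<in> {1..2} \<Longrightarrow> D u0 \<le> D y"
    using continuous_attains_inf[OF compact_Icc _ contD] by auto
  define m where "m = D u0"
  have m: "m > 0" unfolding m_def D_def using NP[of u0] u0(1) by simp
  have D12: "D integrable_on {1..2}" by (rule integrable_on_subinterval[OF Dint]) auto
  have "m \<le> integral {1..2} D"
  proof -
    have "integral {1..2} (\<lambda>_::real. m) \<le> integral {1..2} D"
      by (rule integral_le) (use u0(2) m_def D12 in auto)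
    then show ?thesis by simp
  qed
  also have "\<dots> \<le> integral {0<..} D"
    by (rule integral_subset_le) (use D12 Dint NP in \<open>auto simp: D_def less_imp_le\<close>)
  finally have "m \<le> integral {0<..} D" .
  then show ?thesis unfolding M using normL intD m by linarith
qed



lemma improper_FTC:
  fixes F f :: "real \<Rightarrow> real"
  assumes der: "\<And>u. u \<ge> 0 \<Longrightarrow> (F has_real_derivative f u) (at u)"
    and nn: "\<And>u. u \<ge> 0 \<Longrightarrow> f u \<ge> 0"
    and lim: "(F \<longlongrightarrow> L) at_top"
  shows "(f has_integral (L - F 0)) {0..}"
proof -
  have ftc: "(f has_integral (F y - F 0)) {0..y}" if "y \<ge> 0" for y
  proof (rule fundamental_theorem_of_calculus[OF that])
    fix u assume "u \<in> {0..y}"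
    then have "(F has_real_derivative f u) (at u within {0..y})"
      using der by (auto intro: has_field_derivative_at_within)
    then show "(F has_vector_derivative f u) (at u within {0..y})"
      by (simp add: has_real_derivative_iff_has_vector_derivative)
  qed
  show ?thesis
  proof (rule has_integral_to_inf)
    show "f integrable_on {0..y}" for y
    proof (cases "y \<ge> 0")
      case True then show ?thesis using ftc by blast
    next
      case False then have "{0..y} = {}" by auto
      then show ?thesis using has_integral_empty unfolding integrable_on_def by metis
    qed
    have ev: "eventually (\<lambda>y. F y - F 0 = integral {0..y} f) at_top"
      using eventually_ge_at_top[of "0::real"]
      by (rule eventually_mono) (metis ftc integral_unique)
    have "((\<lambda>y. F y - F 0) \<longlongrightarrow> L - F 0) at_top" by (intro tendsto_intros lim)
    then show "((\<lambda>y. integral {0..y} f) \<longlongrightarrow> L - F 0) at_top"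
      using ev by (rule Lim_transform_eventually)
    show "\<And>y. y \<ge> 0 \<Longrightarrow> f y \<ge> 0" by (rule nn)
  qed
qed

lemma arsinh_tangent:
  fixes u v :: real assumes u: "u \<ge> 0" and v: "v \<ge> 0"
  shows "arsinh u \<le> arsinh v + (u - v) / sqrt (v^2+1)"
proof -
  have D: "\<And>z. DERIV arsinh z :> 1 / sqrt (z^2+1)" by (rule arsinh_real_has_field_derivative)
  consider "u = v" | "v < u" | "u < v" by linarith
  then show ?thesis
  proof cases
    case 1 then show ?thesis by simp
  next
    case 2
    obtain z where z: "v < z" "z < u" "arsinh u - arsinh v = (u - v) * (1 / sqrt (z^2+1))"
      using MVT2[OF 2 D] by blast
    have "sqrt (v^2+1) \<le> sqrt (z^2+1)" using z v by (simp add: power_mono)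
    then have "1 / sqrt (z^2+1) \<le> 1 / sqrt (v^2+1)"
      by (intro divide_left_mono) (auto intro!: mult_pos_pos real_sqrt_gt_zero sq1_pos)
    then have "(u - v) * (1 / sqrt (z^2+1)) \<le> (u - v) * (1 / sqrt (v^2+1))"
      using 2 by (intro mult_left_mono) auto
    then show ?thesis using z by simp
  next
    case 3
    obtain z where z: "u < z" "z < v" "arsinh v - arsinh u = (v - u) * (1 / sqrt (z^2+1))"
      using MVT2[OF 3 D] by blast
    have "sqrt (z^2+1) \<le> sqrt (v^2+1)" using z u by (simp add: power_mono)
    then have "1 / sqrt (v^2+1) \<le> 1 / sqrt (z^2+1)"
      by (intro divide_left_mono) (auto intro!: mult_pos_pos real_sqrt_gt_zero sq1_pos)
    then have "(v - u) * (1 / sqrt (v^2+1)) \<le> (v - u) * (1 / sqrt (z^2+1))"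
      using 3 by (intro mult_left_mono) auto
    moreover have "(u - v) / sqrt (v^2+1) = - ((v - u) * (1 / sqrt (v^2+1)))" by (simp add: diff_divide_distrib)
    ultimately show ?thesis using z by linarith
  qed
qed

lemma M_le_arsinh:
  fixes t :: real assumes t: "t > 0"
  shows "Mfun t \<le> arsinh (1/t)"
proof -
  define v where "v = 1/t"
  define d where "d = 1 / sqrt (v^2+1)"
  define B where "B = (\<lambda>u. exp (- t * u) / sqrt (u\<^sup>2 + 1) + t*exp(-(t*u))*(arsinh v + (u-v)*d - arsinh u))"
  define K where "K = (\<lambda>u. exp(-(t*u))*(arsinh u - (arsinh v + (u-v)*d)) - d/t*exp(-(t*u)))"
  have v: "v > 0" unfolding v_def using t by simp
  have der: "(K has_real_derivative B u) (at u)" if "u \<ge> 0" for u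
  proof -
    have "(K has_real_derivative (-t*exp(-(t*u)))*(arsinh u - (arsinh v + (u-v)*d)) + exp(-(t*u))*(1/sqrt(u^2+1) - d) - d/t*(-t*exp(-(t*u)))) (at u)"
      unfolding K_def by (auto intro!: derivative_eq_intros)
    moreover have "(-t*exp(-(t*u)))*(arsinh u - (arsinh v + (u-v)*d)) + exp(-(t*u))*(1/sqrt(u^2+1) - d) - d/t*(-t*exp(-(t*u))) = B u"
      unfolding B_def using t by (simp add: field_simps)
    ultimately show ?thesis by simp
  qed
  have nn: "B u - exp (- t * u) / sqrt (u\<^sup>2 + 1) \<ge> 0" if "u \<ge> 0" for u
  proof -
    have "arsinh u \<le> arsinh v + (u - v) * d" using arsinh_tangent[OF that less_imp_le[OF v]] unfolding d_def by simp
    then show ?thesis unfolding B_def using t by simp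
  qed
  have Bnn: "B u \<ge> 0" if "u \<ge> 0" for u using nn[OF that] by (smt (verit) divide_nonneg_nonneg exp_ge_zero real_sqrt_ge_zero sq1_pos)
  have lim: "(K \<longlongrightarrow> 0) at_top" unfolding K_def using t by real_asymp
  have K0: "K 0 = - arsinh v" unfolding K_def v_def using t by simp
  have hB: "(B has_integral arsinh v) {0..}" using improper_FTC[OF der Bnn lim] K0 by simp
  have Pint: "(\<lambda>u. exp (- t * u) / sqrt (u\<^sup>2 + 1)) integrable_on {0..}"
    using P_int[OF t] integrable_Ici_Ioi by blast
  have "Mfun t \<le> integral {0..} B" unfolding Mfun_def
    by (rule integral_le[OF Pint]) (use hB nn in auto)
  also have "\<dots> = arsinh (1/t)" using hB v_def by (simp add: integral_unique)
  finally show ?thesis .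
qed



lemma p_facts:
  fixes w :: real assumes w: "w \<ge> 0"
  shows "1 - w/2 + 3*w^2/8 \<ge> 0" "1 \<le> (1 - w/2 + 3*w^2/8)^2 * (1 + w)"
proof -
  have "(1 - w/4)^2 + 5*w^2/16 = 1 - w/2 + 3*w^2/8" by (simp add: power2_eq_square field_simps)
  moreover have "(1 - w/4)^2 + 5*w^2/16 \<ge> 0" by simp
  ultimately show "1 - w/2 + 3*w^2/8 \<ge> 0" by linarith
  have e: "(1 - w/2 + 3*w^2/8)^2 * (1 + w) - 1 = w^3 * (40 - 15*w + 9*w^2) / 64"
    by (simp add: power2_eq_square power3_eq_cube field_simps)
  have "9*(w-5/6)^2 = 9*w^2 - 15*w + 25/4" by (simp add: power2_eq_square field_simps)
  moreover have "(w-5/6)^2 \<ge> 0" by simp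
  ultimately have "40 - 15*w + 9*w^2 > 0" by linarith
  then have "w^3 * (40 - 15*w + 9*w^2) / 64 \<ge> 0" using w by simp
  then show "1 \<le> (1 - w/2 + 3*w^2/8)^2 * (1 + w)" using e by linarith
qed

lemma inv_sqrt_le_p:
  fixes u :: real
  shows "1 / sqrt (u\<^sup>2 + 1) \<le> 1 - u^2/2 + 3*(u^2)^2/8"
proof -
  define w where "w = u^2"
  define q where "q = 1 - w/2 + 3*w^2/8"
  have w: "w \<ge> 0" unfolding w_def by simp
  have q: "q \<ge> 0" "1 \<le> q^2 * (1 + w)" unfolding q_def using p_facts[OF w] by auto
  have "1 = sqrt 1" by simp
  also have "\<dots> \<le> sqrt (q^2 * (1 + w))" using q(2) by (simp only: real_sqrt_le_iff)
  also have "\<dots> = q * sqrt (1 + w)" using q(1) by (simp add: real_sqrt_mult)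
  finally have "1 \<le> q * sqrt (1 + w)" .
  moreover have "sqrt (1 + w) > 0" using w by simp
  ultimately have "1 / sqrt (1 + w) \<le> q" by (simp add: divide_le_eq)
  then show ?thesis unfolding q_def w_def by (simp add: add.commute)
qed

lemma M_le_poly:
  fixes t :: real assumes t: "t > 0"
  shows "Mfun t \<le> 1/t - 1/t^3 + 9/t^5"
proof -
  define p where "p = (\<lambda>u::real. 1 - u^2/2 + 3*(u^2)^2/8)"
  define B where "B = (\<lambda>u. exp(-(t*u)) * p u)"
  define F where "F = (\<lambda>u. - exp(-(t*u)) * (p u/t + (-u + 3*u^3/2)/t^2 + (-1 + 9*u^2/2)/t^3 + 9*u/t^4 + 9/t^5))"
  have der: "(F has_real_derivative B u) (at u)" if "u \<ge> 0" for u
    unfolding F_def B_def p_def using t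
    by (auto intro!: derivative_eq_intros simp: field_simps eval_nat_numeral)
  have Bnn: "B u \<ge> 0" if "u \<ge> 0" for u
    unfolding B_def p_def using p_facts(1)[of "u^2"] by simp
  have lim: "(F \<longlongrightarrow> 0) at_top" unfolding F_def p_def using t by real_asymp
  have F0: "F 0 = -(1/t - 1/t^3 + 9/t^5)" unfolding F_def p_def by simp
  have e: "0 - F 0 = 1/t - 1/t^3 + 9/t^5" using F0 by simp
  have hB: "(B has_integral (1/t - 1/t^3 + 9/t^5)) {0..}" using improper_FTC[OF der Bnn lim] unfolding e .
  have Pint: "(\<lambda>u. exp (- t * u) / sqrt (u\<^sup>2 + 1)) integrable_on {0..}"
    using P_int[OF t] integrable_Ici_Ioi by blast
  have le: "exp (- t * u) / sqrt (u\<^sup>2 + 1) \<le> B u" for u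
  proof -
    have "exp (- t * u) / sqrt (u\<^sup>2 + 1) = exp(-(t*u)) * (1 / sqrt (u\<^sup>2 + 1))" by simp
    also have "\<dots> \<le> exp(-(t*u)) * p u" unfolding p_def by (intro mult_left_mono inv_sqrt_le_p) simp
    finally show ?thesis unfolding B_def .
  qed
  have "Mfun t \<le> integral {0..} B" unfolding Mfun_def
    by (rule integral_le[OF Pint]) (use hB le in auto)
  also have "\<dots> = 1/t - 1/t^3 + 9/t^5" using hB by (simp add: integral_unique)
  finally show ?thesis .
qed

lemma one_plus_sq_ne: "1 + (z::real) * z \<noteq> 0" by (smt (verit) zero_le_square)

lemma arctan_lower:
  fixes y :: real assumes y: "y > 0"
  shows "y - y^3/3 < arctan y"
proof -
  define \<phi> where "\<phi> = (\<lambda>z::real. arctan z - z + z^3/3)"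
  have D: "DERIV \<phi> z :> (1 / (1 + z^2) - 1 + z^2)" for z
  proof -
    have "DERIV (\<lambda>z. arctan z - z + z^3/3) z :> inverse (1 + z\<^sup>2) - 1 + real 3 * z^(3 - Suc 0) / 3"
      by (intro DERIV_add DERIV_diff DERIV_arctan DERIV_ident DERIV_cdivide DERIV_pow)
    then show ?thesis unfolding \<phi>_def by (simp add: inverse_eq_divide)
  qed
  obtain z where z: "0 < z" "z < y" "\<phi> y - \<phi> 0 = (y - 0) * (1 / (1 + z^2) - 1 + z^2)"
    using MVT2[OF y D] by blast
  have nz: "1 + z^2 \<noteq> 0" using one_plus_sq_ne[of z] by (simp add: power2_eq_square)
  have "(1 / (1 + z^2) - 1 + z^2) * (1 + z^2) = 1 / (1 + z^2) * (1 + z^2) - 1 * (1 + z^2) + z^2 * (1 + z^2)"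
    by (simp only: distrib_right left_diff_distrib)
  also have "\<dots> = 1 - (1 + z^2) + z^2 * (1 + z^2)" using nz by simp
  also have "\<dots> = z^4" by (simp add: power2_eq_square power4_eq_xxxx algebra_simps)
  finally have "(1 / (1 + z^2) - 1 + z^2) * (1 + z^2) = z^4" .
  moreover have "z^4 > 0" "1 + z^2 > 0" using z by (auto simp: add_pos_nonneg)
  ultimately have "1 / (1 + z^2) - 1 + z^2 > 0" by (metis zero_less_mult_pos2)
  then have "y * (1 / (1 + z^2) - 1 + z^2) > 0" using y by simp
  moreover have "\<phi> y - \<phi> 0 = y * (1 / (1 + z^2) - 1 + z^2)" using z(3) by simp
  ultimately have "\<phi> y > \<phi> 0" by linarith
  then show ?thesis unfolding \<phi>_def by simp
qed

lemma arccot_pos: fixes t :: real assumes "t > 0" shows "arccot t = arctan (1/t)"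
proof -
  have "arctan (1/t) = sgn t * pi/2 - arctan t" by (rule Transcendental.arctan_inverse) (use assms in simp)
  moreover have "sgn t = 1" using assms by simp
  ultimately show ?thesis unfolding arccot_def by simp
qed

lemma M_lt_arccot: fixes t :: real assumes t: "t > 4" shows "Mfun t < arccot t"
proof -
  define y where "y = 1/t"
  have y: "y > 0" "y < 1/4" unfolding y_def using t by (auto simp: field_simps)
  have "Mfun t \<le> y - y^3 + 9*y^5" using M_le_poly[of t] t unfolding y_def by (simp add: power_one_over)
  also have "\<dots> < y - y^3/3"
  proof -
    have "y^2 < (1/4)^2" by (rule power_strict_mono[OF y(2)]) (use y in auto)
    hence "y^2 < 1/16" by (simp add: power_divide)
    hence "9*y^2 < 2/3" by simp
    moreover have "y^3 > 0" using y by simp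
    ultimately have "y^3 * (9*y^2) < y^3 * (2/3)" by (intro mult_strict_left_mono)
    moreover have e: "y^5 = y^3 * y^2" by (simp add: power_add[symmetric])
    moreover have "9*y^5 = y^3 * (9*y^2)" unfolding e by (simp only: mult_ac)
    ultimately show ?thesis by linarith
  qed
  also have "\<dots> < arctan y" by (rule arctan_lower[OF y(1)])
  also have "\<dots> = arccot t" using arccot_pos t unfolding y_def by simp
  finally show ?thesis .
qed

lemma t0_prop: fixes t :: real assumes "t > t0" shows "Mfun t < arccot t"
proof -
  define S where "S = {s::real. s > 0 \<and> (\<forall>t>s. Mfun t < arccot t)}"
  have "4 \<in> S" unfolding S_def using M_lt_arccot by auto
  moreover have "bdd_below S" unfolding S_def by (rule bdd_belowI[of _ 0]) auto
  ultimately have "\<exists>s\<in>S. s < t" using assms cInf_less_iff[of S t] unfolding t0_def S_def by blast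
  then show ?thesis unfolding S_def by auto
qed

lemma arsinh_bound: fixes t :: real assumes t: "t > 0" "t < 1"
  shows "arsinh (1/t) \<le> ln (1/t) + ln (1 + sqrt 2)"
proof -
  define y where "y = 1/t"
  have y: "y \<ge> 1" unfolding y_def using t by (simp add: field_simps)
  have "sqrt (y^2 + 1) \<le> sqrt (2 * y^2)" using y by (simp add: power_one_over one_le_power)
  also have "\<dots> = sqrt 2 * y" using y by (simp add: real_sqrt_mult)
  finally have s: "sqrt (y^2 + 1) \<le> sqrt 2 * y" .
  have "arsinh y = ln (y + sqrt (y^2 + 1))" by (rule arsinh_real_def)
  also have "\<dots> \<le> ln (y * (1 + sqrt 2))"
  proof (rule ln_mono)
    have "y * (1 + sqrt 2) = y + sqrt 2 * y" by (simp add: algebra_simps)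
    then show "y + sqrt (y^2 + 1) \<le> y * (1 + sqrt 2)" using s by linarith
    show "0 < y + sqrt (y^2 + 1)" using y by (simp add: add_pos_nonneg)
  qed
  also have "\<dots> = ln y + ln (1 + sqrt 2)" by (rule ln_mult_pos) (use y in simp, simp add: add_pos_nonneg)
  finally show ?thesis unfolding y_def .
qed

theorem theorem3:
  fixes x :: real
  assumes "0 < x" and "x < pi"
  shows "(\<forall>\<mu>::real. \<mu> > -1/2 \<longrightarrow>
            cmod (Lser x \<mu>) < Mfun ((2*\<mu>+1) * sin (x/2)))
       \<and> (\<forall>lam::real. lam > 0 \<longrightarrow> cmod (Lbig x lam) < Mfun (lam * sin x))
       \<and> (\<forall>lam::real. lam > 0 \<and> lam * sin x > t0 \<longrightarrow>
            cmod (Lbig x lam) < arccot (lam * sin x))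
       \<and> (\<forall>\<mu>::real. \<mu> > -1/2 \<and> (2*\<mu>+1) * sin (x/2) < 1 \<longrightarrow>
            cmod (Lser x \<mu>) < ln (1 / ((2*\<mu>+1) * sin (x/2))) + ln (1 + sqrt 2))"
proof -
  have x2: "x < 2*pi" using assms by simp
  have A: "cmod (Lser x \<mu>) < Mfun ((2*\<mu>+1) * sin (x/2))" if "\<mu> > -1/2" for \<mu>
    by (rule main_a[OF assms(1) x2 that])
  have Bg: "cmod (Lbig x lam) < Mfun (lam * sin x)" if lam: "lam > 0" for lam
  proof -
    have "cmod (Lbig x lam) = cmod (Lser (2*x) ((lam-1)/2))" unfolding Lbig_def by (simp add: norm_mult)
    also have "\<dots> < Mfun ((2*((lam-1)/2)+1) * sin ((2*x)/2))"
      by (rule main_a) (use assms lam in auto)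
    also have "(2*((lam-1)/2)+1) * sin ((2*x)/2) = lam * sin x" by (simp add: field_simps)
    finally show ?thesis .
  qed
  show ?thesis
  proof (intro conjI allI impI)
    fix \<mu> :: real assume "\<mu> > -1/2" then show "cmod (Lser x \<mu>) < Mfun ((2*\<mu>+1) * sin (x/2))" by (rule A)
  next
    fix lam :: real assume "lam > 0" then show "cmod (Lbig x lam) < Mfun (lam * sin x)" by (rule Bg)
  next
    fix lam :: real assume h: "lam > 0 \<and> lam * sin x > t0"
    have "cmod (Lbig x lam) < Mfun (lam * sin x)" using h Bg by blast
    also have "\<dots> < arccot (lam * sin x)" using h t0_prop by blast
    finally show "cmod (Lbig x lam) < arccot (lam * sin x)" .
  next
    fix \<mu> :: real assume h: "\<mu> > -1/2 \<and> (2*\<mu>+1) * sin (x/2) < 1"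
    define t where "t = (2*\<mu>+1) * sin (x/2)"
    have sx: "sin (x/2) > 0" using assms by (auto intro: sin_gt_zero)
    have t: "t > 0" "t < 1" unfolding t_def using h sx by auto
    have "cmod (Lser x \<mu>) < Mfun t" unfolding t_def using h A by blast
    also have "\<dots> \<le> arsinh (1/t)" by (rule M_le_arsinh[OF t(1)])
    also have "\<dots> \<le> ln (1/t) + ln (1 + sqrt 2)" by (rule arsinh_bound[OF t])
    finally show "cmod (Lser x \<mu>) < ln (1 / ((2*\<mu>+1) * sin (x/2))) + ln (1 + sqrt 2)" unfolding t_def .
  qed
qed


end
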